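(* Let $p$ be a prime and $r,s$ integers with $1\le s\le p-1$. Every proper $(r,s)$-GAP in $\mathbb{F}_p^n$ can be written as a union of independent $(k,s)$-GAPs in $\mathbb{F}_p^n$ for some integer $k\ge r\log s/\log p$.
   Context: For $a_1,\dots,a_r,b\in\mathbb{F}_p^n$, the $(r,s)$-GAP $G_{a_1,\dots,a_r,b}$ is $\{\sum_{i=1}^r a_it_i+b: t_i\in\mathbb{Z},\ 0\le t_i\le s-1\}$; it is proper if all $s^r$ sums are distinct, and independent if $a_1,\dots,a_r$ are linearly independent over $\mathbb{F}_p$. *)

theory Defs
  imports "HOL-Analysis.Cartesian_Space" "Berlekamp_Zassenhaus.Finite_Field"
begin

text \<open>F_p^n is modelled as the type ('p mod_ring)^'n, where 'p :: prime_card has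
  prime cardinality p = CARD('p) and 'n is a finite index type with n = CARD('n).\<close>

definition GAP :: "nat \<Rightarrow> nat \<Rightarrow> (nat \<Rightarrow> 'a::field ^ 'n) \<Rightarrow> 'a ^ 'n \<Rightarrow> ('a ^ 'n) set" where
  "GAP r s a b = {(\<Sum>i<r. of_nat (t i) *s a i) + b | t. \<forall>i<r. t i < s}"

definition proper_GAP :: "nat \<Rightarrow> nat \<Rightarrow> (nat \<Rightarrow> 'a::field ^ 'n) \<Rightarrow> 'a ^ 'n \<Rightarrow> bool" where
  "proper_GAP r s a b \<longleftrightarrow>
     inj_on (\<lambda>t. (\<Sum>i<r. of_nat (t i) *s a i) + b) ({..<r} \<rightarrow>\<^sub>E {..<s})"

definition independent_GAP :: "nat \<Rightarrow> (nat \<Rightarrow> 'a::field ^ 'n) \<Rightarrow> bool" where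
  "independent_GAP r a \<longleftrightarrow> inj_on a {..<r} \<and> vec.independent (a ` {..<r})"

end

theory Submission
  imports Defs
begin

theorem claim5p7:
  fixes r s :: nat
    and a :: "nat \<Rightarrow> ('p::prime_card mod_ring) ^ 'n"
    and b :: "('p mod_ring) ^ 'n"
  assumes "1 \<le> s" and "s \<le> CARD('p) - 1"
    and "proper_GAP r s a b"
  shows "\<exists>k::nat. real k \<ge> real r * ln (real s) / ln (real CARD('p)) \<and>
           (\<exists>\<G>. (\<forall>H\<in>\<G>. \<exists>a' b'. independent_GAP k a' \<and> H = GAP k s a' b') \<and>
                 \<Union>\<G> = GAP r s a b)"
proof -
  define A where "A = a ` {..<r}"
  obtain B where BA: "B \<subseteq> A" and Bind: "vec.independent B" and AB: "A \<subseteq> vec.span B"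
    using vec.maximal_independent_subset by blast
  have finB: "finite B" using BA A_def by (meson finite_imageI finite_lessThan finite_subset)
  define g where "g = inv_into {..<r} a"
  define J where "J = g ` B"
  have ag: "a (g v) = v" if "v \<in> B" for v
    using that BA unfolding A_def g_def by (meson f_inv_into_f subsetD)
  have gr: "g v \<in> {..<r}" if "v \<in> B" for v
    using that BA unfolding A_def g_def by (meson inv_into_into subsetD)
  have JR: "J \<subseteq> {..<r}" using gr J_def by blast
  have aJ: "a ` J = B" using ag J_def by (auto simp: image_iff)
  have injJ: "inj_on a J" unfolding J_def inj_on_def using ag by auto
  have finJ: "finite J" using J_def finB by simp
  define d where "d = card J"
  have cardB: "card B = d" using aJ injJ d_def card_image by blast
  obtain f where f: "bij_betw f {0..<d} J" using ex_bij_betw_nat_finite[OF finJ] d_def by blast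
  have f': "bij_betw f {..<d} J" using f by (simp add: atLeast0LessThan)
  define a' where "a' = a \<circ> f"
  have a'img: "a' ` {..<d} = B" proof -
    have "f ` {..<d} = J" using f' by (simp add: bij_betw_def)
    moreover have "a' ` {..<d} = a ` (f ` {..<d})" unfolding a'_def by (simp add: image_comp)
    ultimately show ?thesis using aJ by simp
  qed
  have ind: "independent_GAP d a'"
    unfolding independent_GAP_def a'_def
  proof
    show "inj_on (a \<circ> f) {..<d}"
      using f' injJ by (metis bij_betw_def comp_inj_on)
    show "vec.independent ((a \<circ> f) ` {..<d})" using a'img a'_def Bind by simp
  qed
  define \<phi> where "\<phi> = (\<lambda>t. (\<Sum>i<r. of_nat (t i) *s a i) + b)"
  have Gimg: "GAP r s a b = \<phi> ` ({..<r} \<rightarrow>\<^sub>E {..<s})"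
  proof
    show "GAP r s a b \<subseteq> \<phi> ` ({..<r} \<rightarrow>\<^sub>E {..<s})"
    proof
      fix x assume "x \<in> GAP r s a b"
      then obtain t where t: "\<forall>i<r. t i < s" "x = (\<Sum>i<r. of_nat (t i) *s a i) + b"
        unfolding GAP_def by blast
      have "x = \<phi> (restrict t {..<r})" unfolding \<phi>_def t(2) by simp
      moreover have "restrict t {..<r} \<in> {..<r} \<rightarrow>\<^sub>E {..<s}" using t(1) by auto
      ultimately show "x \<in> \<phi> ` ({..<r} \<rightarrow>\<^sub>E {..<s})" by blast
    qed
    show "\<phi> ` ({..<r} \<rightarrow>\<^sub>E {..<s}) \<subseteq> GAP r s a b"
      unfolding GAP_def \<phi>_def by (auto simp: PiE_def Pi_def)
  qed
  have cardG: "card (GAP r s a b) = s ^ r"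
    using assms(3) unfolding Gimg proper_GAP_def \<phi>_def
    by (simp add: card_image card_PiE)
  have sub: "GAP r s a b \<subseteq> (\<lambda>x. x + b) ` vec.span B"
  proof
    fix x assume "x \<in> GAP r s a b"
    then obtain t where t: "x = (\<Sum>i<r. of_nat (t i) *s a i) + b"
      unfolding GAP_def by blast
    have "(\<Sum>i<r. of_nat (t i) *s a i) \<in> vec.span B"
    proof (rule vec.span_sum)
      fix i assume "i \<in> {..<r}"
      then have "a i \<in> vec.span B" using AB A_def by blast
      then show "of_nat (t i) *s a i \<in> vec.span B" by (rule vec.span_scale)
    qed
    then show "x \<in> (\<lambda>x. x + b) ` vec.span B" using t by blast
  qed
  have spanimg: "vec.span B = (\<lambda>u. \<Sum>v\<in>B. u v *s v) ` (B \<rightarrow>\<^sub>E UNIV)"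
  proof -
    have "vec.span B = range (\<lambda>u. \<Sum>v\<in>B. u v *s v)" using vec.span_finite[OF finB] .
    also have "\<dots> = (\<lambda>u. \<Sum>v\<in>B. u v *s v) ` (B \<rightarrow>\<^sub>E UNIV)"
    proof
      show "range (\<lambda>u. \<Sum>v\<in>B. u v *s v) \<subseteq> (\<lambda>u. \<Sum>v\<in>B. u v *s v) ` (B \<rightarrow>\<^sub>E UNIV)"
      proof
        fix x assume "x \<in> range (\<lambda>u. \<Sum>v\<in>B. u v *s v)"
        then obtain u where u: "x = (\<Sum>v\<in>B. u v *s v)" by blast
        have "x = (\<Sum>v\<in>B. restrict u B v *s v)" unfolding u by simp
        moreover have "restrict u B \<in> B \<rightarrow>\<^sub>E UNIV" by simp
        ultimately show "x \<in> (\<lambda>u. \<Sum>v\<in>B. u v *s v) ` (B \<rightarrow>\<^sub>E UNIV)" by blast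
      qed
    qed auto
    finally show ?thesis .
  qed
  have "card (vec.span B) \<le> card (B \<rightarrow>\<^sub>E (UNIV :: 'p mod_ring set))"
    unfolding spanimg by (rule card_image_le) (simp add: finB finite_PiE)
  also have "\<dots> = CARD('p) ^ d" using finB cardB by (simp add: card_PiE)
  finally have cs: "card (vec.span B) \<le> CARD('p) ^ d" .
  have "s ^ r \<le> card ((\<lambda>x. x + b) ` vec.span B)"
    unfolding cardG[symmetric] by (rule card_mono[OF _ sub]) simp
  also have "\<dots> \<le> card (vec.span B)" by (rule card_image_le) simp
  finally have sp: "s ^ r \<le> CARD('p) ^ d" using cs by linarith
  have p2: "CARD('p) \<ge> 2" using prime_card[where 'a='p] prime_ge_2_nat by blast
  have "real s ^ r \<le> real CARD('p) ^ d" using sp by (metis of_nat_le_iff of_nat_power)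
  then have "ln (real s ^ r) \<le> ln (real CARD('p) ^ d)"
    using assms(1) by (subst ln_le_cancel_iff) auto
  then have "real r * ln (real s) \<le> real d * ln (real CARD('p))"
    using assms(1) p2 by (simp add: ln_realpow)
  moreover have "ln (real CARD('p)) > 0" using p2 by simp
  ultimately have ineq: "real r * ln (real s) / ln (real CARD('p)) \<le> real d"
    by (simp add: divide_le_eq)
  define c where "c = (\<lambda>t. b + (\<Sum>i\<in>{..<r}-J. of_nat (t i) *s a i))"
  define \<G> where "\<G> = (\<lambda>t. GAP d s a' (c t)) ` {t. \<forall>i<r. t i < s}"
  have split: "(\<Sum>i<r. h i) = (\<Sum>i\<in>J. h i) + (\<Sum>i\<in>{..<r}-J. h i)"
    for h :: "nat \<Rightarrow> ('p mod_ring) ^ 'n"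
    using sum.subset_diff[OF JR] by (simp add: add.commute)
  have reidx: "(\<Sum>j<d. h (f j)) = (\<Sum>i\<in>J. h i)" for h :: "nat \<Rightarrow> ('p mod_ring) ^ 'n"
    using sum.reindex_bij_betw[OF f'] by simp
  have "\<Union>\<G> = GAP r s a b"
  proof
    show "\<Union>\<G> \<subseteq> GAP r s a b"
    proof
      fix x assume "x \<in> \<Union>\<G>"
      then obtain t where t: "\<forall>i<r. t i < s" and xt: "x \<in> GAP d s a' (c t)"
        unfolding \<G>_def by blast
      then obtain u where u: "\<forall>j<d. u j < s"
        and x: "x = (\<Sum>j<d. of_nat (u j) *s a' j) + c t"
        unfolding GAP_def by blast
      define t' where "t' = (\<lambda>i. if i \<in> J then u (inv_into {..<d} f i) else t i)"
      have "\<forall>i<r. t' i < s"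
      proof (intro allI impI)
        fix i assume i: "i < r"
        show "t' i < s"
        proof (cases "i \<in> J")
          case True
          then have "inv_into {..<d} f i \<in> {..<d}"
            using f' by (metis bij_betw_def inv_into_into)
          then show ?thesis using u True unfolding t'_def by simp
        next
          case False
          then show ?thesis using t i unfolding t'_def by simp
        qed
      qed
      moreover have "x = (\<Sum>i<r. of_nat (t' i) *s a i) + b"
      proof -
        have e1: "(\<Sum>i\<in>{..<r}-J. of_nat (t' i) *s a i) = (\<Sum>i\<in>{..<r}-J. of_nat (t i) *s a i)"
          unfolding t'_def by (rule sum.cong) auto
        have "(\<Sum>i\<in>J. of_nat (t' i) *s a i) = (\<Sum>j<d. of_nat (t' (f j)) *s a (f j))"
          using reidx[of "\<lambda>i. of_nat (t' i) *s a i"] by simp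
        also have "\<dots> = (\<Sum>j<d. of_nat (u j) *s a' j)"
        proof (rule sum.cong)
          fix j assume j: "j \<in> {..<d}"
          then have "f j \<in> J" "inv_into {..<d} f (f j) = j"
            using f' by (auto simp: bij_betw_def inv_into_f_f)
          then show "of_nat (t' (f j)) *s a (f j) = of_nat (u j) *s a' j"
            unfolding t'_def a'_def by simp
        qed simp
        finally show ?thesis using x e1 split[of "\<lambda>i. of_nat (t' i) *s a i"]
          unfolding c_def by (simp add: algebra_simps)
      qed
      ultimately show "x \<in> GAP r s a b" unfolding GAP_def by blast
    qed
    show "GAP r s a b \<subseteq> \<Union>\<G>"
    proof
      fix x assume "x \<in> GAP r s a b"
      then obtain t where t: "\<forall>i<r. t i < s" and x: "x = (\<Sum>i<r. of_nat (t i) *s a i) + b"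
        unfolding GAP_def by blast
      have "\<forall>j<d. t (f j) < s" using t f' JR by (auto simp: bij_betw_def)
      moreover have "x = (\<Sum>j<d. of_nat (t (f j)) *s a' j) + c t"
        using x split[of "\<lambda>i. of_nat (t i) *s a i"] reidx[of "\<lambda>i. of_nat (t i) *s a i"]
        unfolding c_def a'_def by (simp add: algebra_simps)
      ultimately have "x \<in> GAP d s a' (c t)" unfolding GAP_def by (intro CollectI exI[of _ "\<lambda>j. t (f j)"]) simp
      then show "x \<in> \<Union>\<G>" using t unfolding \<G>_def by blast
    qed
  qed
  moreover have "\<forall>H\<in>\<G>. \<exists>a' b'. independent_GAP d a' \<and> H = GAP d s a' b'"
    using ind unfolding \<G>_def by blast
  ultimately show ?thesis using ineq by blast
qed

end
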